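(* Let $\alpha=(\alpha_1,\ldots,\alpha_n)$ be a composition, $\sigma\in S_n$, and $i\in\{1,\ldots,n-1\}$ with $\alpha_i=\alpha_{i+1}$. Then the pair of maps $P_i:\mathrm{NAF}(\alpha,\sigma)\times\mathrm{NAF}(\alpha,\sigma s_i)\to\mathbb{Q}(q,t)$ and $P_i:\mathrm{NAF}(\alpha,\sigma s_i)\times\mathrm{NAF}(\alpha,\sigma)\to\mathbb{Q}(q,t)$ is a probabilistic bijection between $\mathrm{NAF}(\alpha,\sigma)$ and $\mathrm{NAF}(\alpha,\sigma s_i)$ with respect to the weight $\mathrm{wt}_{q,t}$; that is, for all $T\in\mathrm{NAF}(\alpha,\sigma)$ and $U\in\mathrm{NAF}(\alpha,\sigma s_i)$, $$\mathrm{wt}_{q,t}(U)P_i(U,T)=\mathrm{wt}_{q,t}(T)P_i(T,U).$$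
   Context: Permutations are in one-line notation; $\sigma s_i$ is $\sigma$ with the entries in positions $i,i+1$ exchanged (so $(\sigma s_i)s_i=\sigma$). A composition is a sequence of nonnegative integers. The skyline diagram is $\mathrm{dg}(\alpha)=\{(j,r):1\le j\le n,\ 1\le r\le\alpha_j\}$ ($j$ = column, $r$ = row) and the augmented diagram is $\mathrm{adg}(\alpha)=\mathrm{dg}(\alpha)\cup\{(j,0):1\le j\le n\}$ (row $0$ is the basement). For $u=(j,r)\in\mathrm{dg}(\alpha)$: the box south of $u$ is $\mathrm{south}(u)=(j,r-1)$; $\mathrm{leg}(u)=\alpha_j-r$; the left arm set is $\{(j',r-1)\in\mathrm{adg}(\alpha):j'<j,\ \alpha_{j'}<\alpha_j\}$, the right arm set is $\{(j',r)\in\mathrm{dg}(\alpha):j'>j,\ \alpha_{j'}\le\alpha_j\}$, $\mathrm{Arm}(u)$ is their union and $\mathrm{arm}(u)=|\mathrm{Arm}(u)|$. Two boxes of $\mathrm{adg}(\alpha)$ attack each other if they are in the same row, or in consecutive rows with the box in the higher row strictly to the right of the box in the lower row. A filling of shape $\alpha$ and basement $\tau\in S_n$ is a map $T:\mathrm{adg}(\alpha)\to\{1,\ldots,n\}$ with $T(j,0)=\tau_j$; $\mathrm{F}(\alpha,\tau)$ is the set of these, and $\mathrm{NAF}(\alpha,\tau)$ the subset of non-attacking ones (attacking boxes have distinct entries). For integers $a,b$ let $\chi(a,b)=1$ if $a>b$ and $0$ otherwise, and $\chi(a,b,c)=\chi(a,b)+\chi(b,c)-\chi(a,c)$. For $T\in\mathrm{NAF}(\alpha,\tau)$: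 a descent is $u\in\mathrm{dg}(\alpha)$ with $T(u)>T(\mathrm{south}(u))$, and $\mathrm{maj}(T)=\sum_{u\text{ descent}}(\mathrm{leg}(u)+1)$; a triple is $(u,v,w)$ with $u\in\mathrm{dg}(\alpha)$, $w=\mathrm{south}(u)$, $v\in\mathrm{Arm}(u)$; it is an inversion triple if $\chi(T(u),T(v),T(w))=1$ and a coinversion triple otherwise; $\mathrm{coinv}(T)$ is the number of coinversion triples; and $\mathrm{wt}_{q,t}(T)=q^{\mathrm{maj}(T)}t^{\mathrm{coinv}(T)}\prod_{u\in\mathrm{dg}(\alpha),\,T(u)\ne T(\mathrm{south}(u))}\frac{1-t}{1-q^{1+\mathrm{leg}(u)}t^{1+\mathrm{arm}(u)}}$. Fix $i$ with $\alpha_i=\alpha_{i+1}$. For a filling $T$ and $0\le r\le\alpha_i$, $\mathrm{swap}_r(T)$ exchanges the entries of boxes $(i,r)$ and $(i+1,r)$, and $\Omega_{0,h}=\mathrm{swap}_h\circ\cdots\circ\mathrm{swap}_0$. For $T\in\mathrm{NAF}(\alpha,\tau)$ (any $\tau$) and $0\le r\le\alpha_i-1$, let $a=T(i,r)$, $b=T(i+1,r)$, $c=T(i,r+1)$, $d=T(i+1,r+1)$, $A=\mathrm{arm}(i+1,r+1)$, $\ell=\mathrm{leg}(i+1,r+1)$, and define $\rho_r(T)\in\mathbb{Q}(q,t)$: if $a,b,c,d$ are distinct, $\rho_r(T)=0$ when $\chi(c,d,a)=\chi(c,d,b)$ and $\rho_r(T)=1$ when $\chi(c,d,a)=\chi(d,c,b)$;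 if exactly three of them are distinct, then $\rho_r(T)=0$ if $b=c$, $\rho_r(T)=1$ if $b=d$, and $\rho_r(T)=t^{1-\chi(d,a,b)}\frac{1-q^{\ell+1}t^{A+1}}{1-q^{\ell+1}t^{A+2}}$ if $a=c$; if $a=c$ and $b=d$, $\rho_r(T)=1$. Also set $\rho_{\alpha_i}(T)=0$. For $T\in\mathrm{NAF}(\alpha,\tau)$ and a filling $U$ of shape $\alpha$ and basement $\tau s_i$, $P_i(T,U)=\left(\prod_{r=0}^{h-1}\rho_r(T)\right)(1-\rho_h(T))$ if $U=\Omega_{0,h}(T)$ for some $h\in\{0,\ldots,\alpha_i\}$, and $P_i(T,U)=0$ otherwise. This is applied both with $\tau=\sigma$ and with $\tau=\sigma s_i$. A probabilistic bijection between $(\mathbf{T},\mathrm{wt})$ and $(\mathbf{U},\mathrm{wt})$ is a pair $P_{\mathbf{T}}:\mathbf{T}\times\mathbf{U}\to A$, $P_{\mathbf{U}}:\mathbf{U}\times\mathbf{T}\to A$ with $\sum_{U}P_{\mathbf{T}}(T,U)=1$, $\sum_TP_{\mathbf{U}}(U,T)=1$, and $\mathrm{wt}(T)P_{\mathbf{T}}(T,U)=\mathrm{wt}(U)P_{\mathbf{U}}(U,T)$ for all $T,U$. *)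

theory Defs
  imports "HOL-Combinatorics.Permutations" "HOL-Computational_Algebra.Polynomial"
          "HOL-Computational_Algebra.Fraction_Field"
begin

text \<open>Q(q,t) is the fraction field of (Q[q])[t].\<close>
type_synonym qt = "rat poly poly fract"

definition qv :: qt where "qv = Fract [:[:0, 1:]:] 1"
definition tv :: qt where "tv = Fract [:0, 1:] 1"

text \<open>One-line notation: sigma s_i exchanges the entries in positions i, i+1.\<close>
definition perm_si :: "(nat \<Rightarrow> nat) \<Rightarrow> nat \<Rightarrow> nat \<Rightarrow> nat" where
  "perm_si \<sigma> i = (\<lambda>j. if j = i then \<sigma> (i+1) else if j = i+1 then \<sigma> i else \<sigma> j)"

text \<open>A composition of length n is alpha restricted to columns 1..n; boxes are (column,row).\<close>
definition dg :: "nat \<Rightarrow> (nat \<Rightarrow> nat) \<Rightarrow> (nat \<times> nat) set" where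
  "dg n \<alpha> = {(j, r). 1 \<le> j \<and> j \<le> n \<and> 1 \<le> r \<and> r \<le> \<alpha> j}"

definition adg :: "nat \<Rightarrow> (nat \<Rightarrow> nat) \<Rightarrow> (nat \<times> nat) set" where
  "adg n \<alpha> = dg n \<alpha> \<union> {(j, 0) | j. 1 \<le> j \<and> j \<le> n}"

definition south :: "nat \<times> nat \<Rightarrow> nat \<times> nat" where
  "south u = (fst u, snd u - 1)"

definition leg :: "(nat \<Rightarrow> nat) \<Rightarrow> nat \<times> nat \<Rightarrow> nat" where
  "leg \<alpha> u = \<alpha> (fst u) - snd u"

definition Arm :: "nat \<Rightarrow> (nat \<Rightarrow> nat) \<Rightarrow> nat \<times> nat \<Rightarrow> (nat \<times> nat) set" where
  "Arm n \<alpha> u =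
     {(j', r'). (j', r') \<in> adg n \<alpha> \<and> r' = snd u - 1 \<and> j' < fst u \<and> \<alpha> j' < \<alpha> (fst u)}
   \<union> {(j', r'). (j', r') \<in> dg n \<alpha> \<and> r' = snd u \<and> j' > fst u \<and> \<alpha> j' \<le> \<alpha> (fst u)}"

definition arm :: "nat \<Rightarrow> (nat \<Rightarrow> nat) \<Rightarrow> nat \<times> nat \<Rightarrow> nat" where
  "arm n \<alpha> u = card (Arm n \<alpha> u)"

definition attacks :: "nat \<times> nat \<Rightarrow> nat \<times> nat \<Rightarrow> bool" where
  "attacks u v \<longleftrightarrow> u \<noteq> v \<and>
     (snd u = snd v
      \<or> (snd v = snd u + 1 \<and> fst v > fst u)
      \<or> (snd u = snd v + 1 \<and> fst u > fst v))"

text \<open>Fillings are maps on the augmented diagram; they are extended by 0 outside it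
  so that the set of fillings is finite.\<close>
definition fillings :: "nat \<Rightarrow> (nat \<Rightarrow> nat) \<Rightarrow> (nat \<Rightarrow> nat) \<Rightarrow> (nat \<times> nat \<Rightarrow> nat) set" where
  "fillings n \<alpha> \<tau> = {T. (\<forall>u \<in> adg n \<alpha>. T u \<in> {1..n})
                       \<and> (\<forall>j \<in> {1..n}. T (j, 0) = \<tau> j)
                       \<and> (\<forall>u. u \<notin> adg n \<alpha> \<longrightarrow> T u = 0)}"

definition NAF :: "nat \<Rightarrow> (nat \<Rightarrow> nat) \<Rightarrow> (nat \<Rightarrow> nat) \<Rightarrow> (nat \<times> nat \<Rightarrow> nat) set" where
  "NAF n \<alpha> \<tau> = {T \<in> fillings n \<alpha> \<tau>.
      \<forall>u \<in> adg n \<alpha>. \<forall>v \<in> adg n \<alpha>. attacks u v \<longrightarrow> T u \<noteq> T v}"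

definition chi :: "nat \<Rightarrow> nat \<Rightarrow> int" where
  "chi a b = (if a > b then 1 else 0)"

definition chi3 :: "nat \<Rightarrow> nat \<Rightarrow> nat \<Rightarrow> int" where
  "chi3 a b c = chi a b + chi b c - chi a c"

definition descents :: "nat \<Rightarrow> (nat \<Rightarrow> nat) \<Rightarrow> (nat \<times> nat \<Rightarrow> nat) \<Rightarrow> (nat \<times> nat) set" where
  "descents n \<alpha> T = {u \<in> dg n \<alpha>. T u > T (south u)}"

definition maj :: "nat \<Rightarrow> (nat \<Rightarrow> nat) \<Rightarrow> (nat \<times> nat \<Rightarrow> nat) \<Rightarrow> nat" where
  "maj n \<alpha> T = (\<Sum>u \<in> descents n \<alpha> T. leg \<alpha> u + 1)"

text \<open>A triple (u,v,w) has w = south u, so it is determined by (u,v).\<close>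
definition coinv_triples :: "nat \<Rightarrow> (nat \<Rightarrow> nat) \<Rightarrow> (nat \<times> nat \<Rightarrow> nat)
                               \<Rightarrow> ((nat \<times> nat) \<times> (nat \<times> nat)) set" where
  "coinv_triples n \<alpha> T = {(u, v). u \<in> dg n \<alpha> \<and> v \<in> Arm n \<alpha> u
                            \<and> chi3 (T u) (T v) (T (south u)) \<noteq> 1}"

definition coinv :: "nat \<Rightarrow> (nat \<Rightarrow> nat) \<Rightarrow> (nat \<times> nat \<Rightarrow> nat) \<Rightarrow> nat" where
  "coinv n \<alpha> T = card (coinv_triples n \<alpha> T)"

definition wt :: "nat \<Rightarrow> (nat \<Rightarrow> nat) \<Rightarrow> (nat \<times> nat \<Rightarrow> nat) \<Rightarrow> qt" where
  "wt n \<alpha> T = qv ^ maj n \<alpha> T * tv ^ coinv n \<alpha> T *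
     (\<Prod>u \<in> {u \<in> dg n \<alpha>. T u \<noteq> T (south u)}.
        (1 - tv) / (1 - qv ^ (1 + leg \<alpha> u) * tv ^ (1 + arm n \<alpha> u)))"

definition swap_row :: "nat \<Rightarrow> nat \<Rightarrow> (nat \<times> nat \<Rightarrow> nat) \<Rightarrow> (nat \<times> nat \<Rightarrow> nat)" where
  "swap_row i r T = T((i, r) := T (i+1, r), (i+1, r) := T (i, r))"

fun Omega :: "nat \<Rightarrow> nat \<Rightarrow> (nat \<times> nat \<Rightarrow> nat) \<Rightarrow> (nat \<times> nat \<Rightarrow> nat)" where
  "Omega i 0 T = swap_row i 0 T"
| "Omega i (Suc h) T = swap_row i (Suc h) (Omega i h T)"

definition rho :: "nat \<Rightarrow> (nat \<Rightarrow> nat) \<Rightarrow> nat \<Rightarrow> (nat \<times> nat \<Rightarrow> nat) \<Rightarrow> nat \<Rightarrow> qt" where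
  "rho n \<alpha> i T r =
    (if r = \<alpha> i then 0 else
     (let a = T (i, r); b = T (i+1, r); c = T (i, r+1); d = T (i+1, r+1);
          A = arm n \<alpha> (i+1, r+1); l = leg \<alpha> (i+1, r+1) in
      if distinct [a, b, c, d] then
        (if chi3 c d a = chi3 c d b then 0 else if chi3 c d a = chi3 d c b then 1 else 0)
      else if card {a, b, c, d} = 3 then
        (if b = c then 0
         else if b = d then 1
         else if a = c then
           tv powi (1 - chi3 d a b) *
           ((1 - qv ^ (l+1) * tv ^ (A+1)) / (1 - qv ^ (l+1) * tv ^ (A+2)))
         else 0)
      else if a = c \<and> b = d then 1
      else 0))"

definition P_i :: "nat \<Rightarrow> (nat \<Rightarrow> nat) \<Rightarrow> nat \<Rightarrow> (nat \<times> nat \<Rightarrow> nat) \<Rightarrow> (nat \<times> nat \<Rightarrow> nat) \<Rightarrow> qt" where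
  "P_i n \<alpha> i T U =
    (if \<exists>h \<le> \<alpha> i. U = Omega i h T then
       (let h = (THE h. h \<le> \<alpha> i \<and> U = Omega i h T) in
        (\<Prod>r < h. rho n \<alpha> i T r) * (1 - rho n \<alpha> i T h))
     else 0)"

definition prob_bij :: "'t set \<Rightarrow> 'u set \<Rightarrow> ('t \<Rightarrow> 'a::field) \<Rightarrow> ('u \<Rightarrow> 'a)
                         \<Rightarrow> ('t \<Rightarrow> 'u \<Rightarrow> 'a) \<Rightarrow> ('u \<Rightarrow> 't \<Rightarrow> 'a) \<Rightarrow> bool" where
  "prob_bij Ts Us wT wU PT PU \<longleftrightarrow>
     (\<forall>T \<in> Ts. (\<Sum>U \<in> Us. PT T U) = 1)
   \<and> (\<forall>U \<in> Us. (\<Sum>T \<in> Ts. PU U T) = 1)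
   \<and> (\<forall>T \<in> Ts. \<forall>U \<in> Us. wT T * PT T U = wU U * PU U T)"

end

theory Submission
  imports Defs
begin


lemma Fract_pow1: "Fract (a::'a::idom) 1 ^ k = Fract (a^k) 1"
  by (induct k) (simp_all add: One_fract_def)

lemma qt_mon: "qv^L * tv^m = Fract ([:[:0,1:]^L:] * [:0,1:]^m) 1"
  by (simp add: qv_def tv_def Fract_pow1 monom_0 [symmetric] monom_power)

lemma nz_aux:
  assumes "L \<ge> 1"
  shows "([:[:0,1:]^L:] * [:0,1:]^m :: rat poly poly) \<noteq> 1"
proof
  assume h: "([:[:0,1:]^L:] * [:0,1:]^m :: rat poly poly) = 1"
  have x0: "([:0,1:]^L :: rat poly) \<noteq> 0" by simp
  have "degree ([:[:0,1:]^L:] * [:0,1:]^m :: rat poly poly) = m"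
    using x0 by (simp add: degree_mult_eq degree_power_eq)
  with h have m0: "m = 0" by simp
  with h have "([:0,1:]^L :: rat poly) = 1" by (simp add: one_pCons)
  hence "degree ([:0,1:]^L :: rat poly) = 0" by simp
  moreover have "degree ([:0,1:]^L :: rat poly) = L" by (simp add: degree_power_eq)
  ultimately show False using assms by simp
qed

lemma den_nz: "L \<ge> 1 \<Longrightarrow> 1 - qv^L * tv^m \<noteq> 0"
  using nz_aux[of L m]
  by (simp add: qt_mon One_fract_def Zero_fract_def eq_fract)

definition fac :: "bool \<Rightarrow> nat \<Rightarrow> nat \<Rightarrow> qt" where
  "fac c L m = (if c then (1 - tv) / (1 - qv^L * tv^m) else 1)"

definition Kf :: "(nat \<times> nat) set \<Rightarrow> (nat \<times> nat \<Rightarrow> nat) \<Rightarrow> nat \<Rightarrow> nat \<Rightarrow> nat" where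
  "Kf W f x y = card {v \<in> W. chi3 x (f v) y \<noteq> 1}"

definition GL :: "nat \<Rightarrow> nat \<Rightarrow> (nat \<Rightarrow> nat \<Rightarrow> nat) \<Rightarrow> nat \<Rightarrow> nat \<Rightarrow> nat \<Rightarrow> nat \<Rightarrow> qt" where
  "GL L A K a b c d = qv^((if c > a then L else 0) + (if d > b then L else 0))
     * tv^((if chi3 c d a \<noteq> 1 then 1 else 0) + K c a + K d b)
     * fac (c \<noteq> a) L (A+2) * fac (d \<noteq> b) L (A+1)"

definition rhoL :: "nat \<Rightarrow> nat \<Rightarrow> nat \<Rightarrow> nat \<Rightarrow> nat \<Rightarrow> nat \<Rightarrow> qt" where
  "rhoL A L a b c d =
      (if distinct [a, b, c, d] then
        (if chi3 c d a = chi3 c d b then 0 else if chi3 c d a = chi3 d c b then 1 else 0)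
      else if card {a, b, c, d} = 3 then
        (if b = c then 0
         else if b = d then 1
         else if a = c then
           tv powi (1 - chi3 d a b) *
           ((1 - qv ^ L * tv ^ (A+1)) / (1 - qv ^ L * tv ^ (A+2)))
         else 0)
      else if a = c \<and> b = d then 1
      else 0)"

lemma chi3_01: "x \<noteq> y \<Longrightarrow> y \<noteq> z \<Longrightarrow> x \<noteq> z \<Longrightarrow> chi3 x y z = 0 \<or> chi3 x y z = 1"
  unfolding chi3_def chi_def by auto

lemma chi3_swap: "x \<noteq> y \<Longrightarrow> y \<noteq> z \<Longrightarrow> x \<noteq> z \<Longrightarrow> chi3 y x z = 1 - chi3 x y z"
  unfolding chi3_def chi_def by auto

lemma chi3_aza: "z \<noteq> a \<Longrightarrow> chi3 a z a = 1"
  unfolding chi3_def chi_def by auto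

lemma card_filter_sum: "finite W \<Longrightarrow> card {v \<in> W. P v} = (\<Sum>v\<in>W. if P v then 1 else 0)"
  using sum.inter_filter[of W "\<lambda>_. 1::nat" P] by simp

lemma K_aa: "\<forall>v\<in>W. f v \<noteq> a \<Longrightarrow> Kf W f a a = 0"
proof -
  assume h: "\<forall>v\<in>W. f v \<noteq> a"
  have "{v \<in> W. chi3 a (f v) a \<noteq> 1} = {}" using h chi3_aza by auto
  thus ?thesis unfolding Kf_def by (metis card.empty)
qed

lemma chi_anti: "x \<noteq> y \<Longrightarrow> chi x y + chi y x = 1"
  unfolding chi_def by auto

lemma ind_chi3: "x \<noteq> y \<Longrightarrow> y \<noteq> z \<Longrightarrow> x \<noteq> z \<Longrightarrow>
   int (if chi3 x y z \<noteq> 1 then 1 else 0) = 1 - chi3 x y z"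
  using chi3_01[of x y z] by auto

lemma pw_wrap:
  assumes "z \<noteq> a" "z \<noteq> b" "z \<noteq> d" "a \<noteq> b" "a \<noteq> d" "b \<noteq> d"
  shows "(if chi3 a z b \<noteq> 1 then 1 else 0) + (if chi3 d z a \<noteq> 1 then 1 else 0)
      = (if chi3 d z b \<noteq> 1 then 1 else 0) + (if chi3 d a b = 1 then 1 else (0::nat))"
proof -
  have "int ((if chi3 a z b \<noteq> 1 then 1 else 0) + (if chi3 d z a \<noteq> 1 then 1 else 0))
      = (1 - chi3 a z b) + (1 - chi3 d z a)"
    using ind_chi3[of a z b] ind_chi3[of d z a] assms by simp
  also have "\<dots> = (1 - chi3 d z b) + (if chi3 d a b = 1 then 1 else 0)"
    using chi3_01[of d a b] chi_anti[of a z] assms unfolding chi3_def by auto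
  also have "\<dots> = int ((if chi3 d z b \<noteq> 1 then 1 else 0) + (if chi3 d a b = 1 then 1 else (0::nat)))"
    using ind_chi3[of d z b] assms by simp
  finally show ?thesis by linarith
qed

lemma pw_sw:
  assumes "z \<noteq> a" "z \<noteq> b" "z \<noteq> c" "z \<noteq> d" "distinct [a,b,c,d]" "chi3 c d a = chi3 c d b"
  shows "(if chi3 c z a \<noteq> 1 then 1 else 0) + (if chi3 d z b \<noteq> 1 then 1 else 0)
      = (if chi3 c z b \<noteq> 1 then 1 else 0) + (if chi3 d z a \<noteq> 1 then 1 else (0::nat))"
proof -
  have e: "chi c a + chi d b = chi c b + chi d a" using assms(6) unfolding chi3_def by linarith
  have ne: "c \<noteq> a" "d \<noteq> b" "c \<noteq> b" "d \<noteq> a" using assms(5) by auto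
  have "int ((if chi3 c z a \<noteq> 1 then 1 else 0) + (if chi3 d z b \<noteq> 1 then 1 else 0))
      = (1 - chi3 c z a) + (1 - chi3 d z b)"
    using ind_chi3[of c z a] ind_chi3[of d z b] assms(1-4) ne by simp
  also have "\<dots> = (1 - chi3 c z b) + (1 - chi3 d z a)"
    using e unfolding chi3_def by linarith
  also have "\<dots> = int ((if chi3 c z b \<noteq> 1 then 1 else 0) + (if chi3 d z a \<noteq> 1 then 1 else (0::nat)))"
    using ind_chi3[of c z b] ind_chi3[of d z a] assms(1-4) ne by simp
  finally show ?thesis by linarith
qed

lemma K_wrap:
  assumes "finite W" "\<forall>v\<in>W. f v \<noteq> a \<and> f v \<noteq> b \<and> f v \<noteq> d" "a \<noteq> b" "a \<noteq> d" "b \<noteq> d"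
  shows "Kf W f a b + Kf W f d a = Kf W f d b + (if chi3 d a b = 1 then card W else 0)"
proof -
  have pw: "(if chi3 a (f v) b \<noteq> 1 then 1 else 0) + (if chi3 d (f v) a \<noteq> 1 then 1 else 0)
      = (if chi3 d (f v) b \<noteq> 1 then 1 else 0) + (if chi3 d a b = 1 then 1 else (0::nat))" if "v \<in> W" for v
    using assms(2) that assms(3-5) by (intro pw_wrap) auto
  have "Kf W f a b + Kf W f d a = (\<Sum>v\<in>W. (if chi3 a (f v) b \<noteq> 1 then 1 else 0) + (if chi3 d (f v) a \<noteq> 1 then 1 else 0))"
    unfolding Kf_def using assms(1) by (simp add: card_filter_sum sum.distrib)
  also have "\<dots> = (\<Sum>v\<in>W. (if chi3 d (f v) b \<noteq> 1 then 1 else 0) + (if chi3 d a b = 1 then 1 else (0::nat)))"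
    using pw by (rule sum.cong[OF refl])
  also have "\<dots> = Kf W f d b + (if chi3 d a b = 1 then card W else 0)"
    unfolding Kf_def using assms(1) by (simp add: card_filter_sum sum.distrib)
  finally show ?thesis .
qed

lemma K_sw:
  assumes "finite W" "\<forall>v\<in>W. f v \<notin> {a,b,c,d}" "distinct [a,b,c,d]" "chi3 c d a = chi3 c d b"
  shows "Kf W f c a + Kf W f d b = Kf W f c b + Kf W f d a"
proof -
  have pw: "(if chi3 c (f v) a \<noteq> 1 then 1 else 0) + (if chi3 d (f v) b \<noteq> 1 then 1 else 0)
      = (if chi3 c (f v) b \<noteq> 1 then 1 else 0) + (if chi3 d (f v) a \<noteq> 1 then 1 else (0::nat))" if "v \<in> W" for v
    using assms(2) that assms(3,4) by (intro pw_sw) auto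
  have "Kf W f c a + Kf W f d b = (\<Sum>v\<in>W. (if chi3 c (f v) a \<noteq> 1 then 1 else 0) + (if chi3 d (f v) b \<noteq> 1 then 1 else 0))"
    unfolding Kf_def using assms(1) by (simp add: card_filter_sum sum.distrib)
  also have "\<dots> = (\<Sum>v\<in>W. (if chi3 c (f v) b \<noteq> 1 then 1 else 0) + (if chi3 d (f v) a \<noteq> 1 then 1 else (0::nat)))"
    using pw by (rule sum.cong[OF refl])
  also have "\<dots> = Kf W f c b + Kf W f d a"
    unfolding Kf_def using assms(1) by (simp add: card_filter_sum sum.distrib)
  finally show ?thesis .
qed



lemma L1_ac:
  assumes fin: "finite W" and vW: "\<forall>v\<in>W. f v \<notin> {a,b,c,d}" and L: "L \<ge> 1"
   and n1: "a\<noteq>b" "c\<noteq>d" "a\<noteq>d" "b\<noteq>c" and ac: "a = c" and bd: "b \<noteq> d"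
  shows "GL L (card W) (Kf W f) a b c d * rhoL (card W) L a b c d
       = GL L (card W) (Kf W f) b a d c * rhoL (card W) L b a d c"
proof -
  define A where "A = card W"
  define K where "K = Kf W f"
  define X where "X = (if d > b then L else 0)"
  have Kaa: "K a a = 0" unfolding K_def using vW by (intro K_aa) auto
  have c3a: "chi3 a d a = 1" using n1 by (intro chi3_aza) auto
  have r1: "rhoL A L a b c d = tv powi (1 - chi3 d a b) * ((1 - qv ^ L * tv ^ (A+1)) / (1 - qv ^ L * tv ^ (A+2)))"
    using n1 ac bd unfolding rhoL_def by (auto simp: insert_commute)
  have r2: "rhoL A L b a d c = 1"
    using n1 ac bd unfolding rhoL_def by (auto simp: insert_commute)
  have g1: "GL L A K a b c d = qv^X * tv^(K d b) * ((1 - tv) / (1 - qv^L * tv^(A+1)))"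
    using n1 ac bd Kaa c3a unfolding GL_def fac_def X_def by auto
  have g2: "GL L A K b a d c = qv^X * tv^((if chi3 d a b \<noteq> 1 then 1 else 0) + K d b) * ((1 - tv) / (1 - qv^L * tv^(A+2)))"
    using n1 ac bd Kaa unfolding GL_def fac_def X_def by auto
  define N1 where "N1 = 1 - qv^L * tv^(A+1)"
  define N2 where "N2 = 1 - qv^L * tv^(A+2)"
  have N1nz: "N1 \<noteq> 0" unfolding N1_def using L by (rule den_nz)
  have key: "(1 - tv) / N1 * (N1 / N2) = (1 - tv) / N2" using N1nz by simp
  note r1 = r1[folded N1_def N2_def]
  note g1 = g1[folded N1_def]
  note g2 = g2[folded N2_def]
  have "GL L A K a b c d * rhoL A L a b c d = GL L A K b a d c * rhoL A L b a d c"
  proof (cases "chi3 d a b = 1")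
    case True
    have "GL L A K a b c d * rhoL A L a b c d = qv^X * tv^(K d b) * ((1 - tv) / N1 * (N1 / N2))"
      unfolding r1 g1 using True by (simp add: mult.assoc)
    also have "\<dots> = GL L A K b a d c * rhoL A L b a d c"
      unfolding key r2 g2 using True by simp
    finally show ?thesis .
  next
    case False
    then have e0: "chi3 d a b = 0" using chi3_01[of d a b] n1 ac bd by auto
    have "GL L A K a b c d * rhoL A L a b c d = tv * (qv^X * tv^(K d b) * ((1 - tv) / N1 * (N1 / N2)))"
      unfolding r1 g1 using e0 by (simp add: mult_ac)
    also have "\<dots> = GL L A K b a d c * rhoL A L b a d c"
      unfolding key r2 g2 using e0 by (simp add: mult_ac)
    finally show ?thesis .
  qed
  thus ?thesis unfolding A_def K_def .
qed

lemma L1: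
  assumes fin: "finite W" and vW: "\<forall>v\<in>W. f v \<notin> {a,b,c,d}" and L: "L \<ge> 1"
   and n1: "a\<noteq>b" "c\<noteq>d" "a\<noteq>d" "b\<noteq>c"
  shows "GL L (card W) (Kf W f) a b c d * rhoL (card W) L a b c d
       = GL L (card W) (Kf W f) b a d c * rhoL (card W) L b a d c"
proof (cases "distinct [a,b,c,d]")
  case True
  have s1: "chi3 d c b = 1 - chi3 c d b" "chi3 d c a = 1 - chi3 c d a"
    using True by (auto intro!: chi3_swap)
  have o1: "chi3 c d a = 0 \<or> chi3 c d a = 1" "chi3 c d b = 0 \<or> chi3 c d b = 1"
    using chi3_01[of c d a] chi3_01[of c d b] True by auto
  have T2: "distinct [b,a,d,c]" using True by auto
  show ?thesis
  proof (cases "chi3 c d a = chi3 c d b")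
    case True
    then show ?thesis using T2 \<open>distinct [a,b,c,d]\<close> s1 unfolding rhoL_def by simp
  next
    case False
    have e: "chi3 d c b = chi3 c d a" using False s1 o1 by auto
    have r: "rhoL (card W) L a b c d = 1" "rhoL (card W) L b a d c = 1"
      using False T2 \<open>distinct [a,b,c,d]\<close> s1 e unfolding rhoL_def by auto
    have "GL L (card W) (Kf W f) a b c d = GL L (card W) (Kf W f) b a d c"
      unfolding GL_def fac_def using e \<open>distinct [a,b,c,d]\<close> by (simp add: ac_simps)
    then show ?thesis using r by simp
  qed
next
  case False
  hence "a = c \<or> b = d" using n1 by auto
  moreover
  { assume ac: "a = c" and bd: "b \<noteq> d"
    have ?thesis using L1_ac[OF fin vW L n1 ac bd] . }
  moreover
  { assume bd: "b = d" and ac: "a \<noteq> c"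
    have vW': "\<forall>v\<in>W. f v \<notin> {b,a,d,c}" using vW by auto
    have ?thesis using L1_ac[OF fin vW' L _ _ _ _ bd ac] n1 by auto }
  moreover
  { assume ac: "a = c" and bd: "b = d"
    have Kaa: "Kf W f a a = 0" "Kf W f b b = 0" using vW ac bd by (auto intro!: K_aa)
    have c3: "chi3 a b a = 1" "chi3 b a b = 1" using n1 by (auto intro!: chi3_aza)
    have r: "rhoL (card W) L a b c d = 1" "rhoL (card W) L b a d c = 1"
      using ac bd n1 unfolding rhoL_def by (auto simp: insert_commute)
    have ?thesis using ac bd Kaa c3 r unfolding GL_def fac_def by simp }
  ultimately show ?thesis by blast
qed

lemma qexp_wrap:
  assumes "a \<noteq> b" "a \<noteq> d" "b \<noteq> d"
  shows "(if a > b then L else 0) + (if d > a then L else 0)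
       = (if d > b then L else 0) + (if chi3 d a b = 1 then L else (0::nat))"
  using assms unfolding chi3_def chi_def by auto

lemma qexp_sw:
  assumes "chi3 c d a = chi3 c d b"
  shows "(if c > a then L else 0) + (if d > b then L else 0)
       = (if c > b then L else 0) + (if d > a then L else (0::nat))"
proof -
  have e: "chi c a + chi d b = chi c b + chi d a" using assms unfolding chi3_def by linarith
  thus ?thesis unfolding chi_def by (auto split: if_splits)
qed

lemma L2_ac:
  assumes fin: "finite W" and vW: "\<forall>v\<in>W. f v \<notin> {a,b,c,d}" and L: "L \<ge> 1"
   and n1: "a\<noteq>b" "c\<noteq>d" "a\<noteq>d" "b\<noteq>d" and ac: "a = c"
  shows "GL L (card W) (Kf W f) a b c d * (1 - rhoL (card W) L a b c d)
       = GL L (card W) (Kf W f) b a c d * (1 - rhoL (card W) L b a c d)"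
proof -
  define A where "A = card W"
  define K where "K = Kf W f"
  define X where "X = (if d > b then L else 0)"
  define N1 where "N1 = 1 - qv^L * tv^(A+1)"
  define N2 where "N2 = 1 - qv^L * tv^(A+2)"
  define F1 where "F1 = (1 - tv) / N1"
  define F2 where "F2 = (1 - tv) / N2"
  have N2nz: "N2 \<noteq> 0" unfolding N2_def using L by (rule den_nz)
  have Kaa: "K a a = 0" unfolding K_def using vW by (intro K_aa) auto
  have c3a: "chi3 a d a = 1" using n1 by (intro chi3_aza) auto
  have Kw: "K a b + K d a = K d b + (if chi3 d a b = 1 then A else 0)"
    unfolding K_def A_def using fin vW n1 by (intro K_wrap) auto
  have qw: "(if a > b then L else 0) + (if d > a then L else 0) = X + (if chi3 d a b = 1 then L else (0::nat))"
    unfolding X_def by (rule qexp_wrap[OF n1(1) n1(3) n1(4)])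
  have sw: "chi3 a d b = 1 - chi3 d a b" using n1 by (intro chi3_swap) auto
  have r1: "rhoL A L a b c d = tv powi (1 - chi3 d a b) * (N1 / N2)"
    using n1 ac unfolding rhoL_def N1_def N2_def by (auto simp: insert_commute)
  have r2: "rhoL A L b a c d = 0"
    using n1 ac unfolding rhoL_def by (auto simp: insert_commute)
  have g1: "GL L A K a b c d = qv^X * tv^(K d b) * F1"
    using n1 ac Kaa c3a unfolding GL_def fac_def X_def F1_def N1_def by auto
  have g2: "GL L A K b a c d = qv^((if a > b then L else 0) + (if d > a then L else 0))
        * tv^((if chi3 a d b \<noteq> 1 then 1 else 0) + (K a b + K d a)) * F2 * F1"
    using n1 ac unfolding GL_def fac_def F1_def F2_def N1_def N2_def by (simp add: ac_simps)
  have "GL L A K a b c d * (1 - rhoL A L a b c d) = GL L A K b a c d * (1 - rhoL A L b a c d)"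
  proof (cases "chi3 d a b = 1")
    case True
    have key: "1 - N1 / N2 = qv^L * tv^(A+1) * F2"
      using N2nz unfolding F2_def N1_def N2_def by (simp add: field_simps)
    have "GL L A K a b c d * (1 - rhoL A L a b c d) = qv^X * tv^(K d b) * F1 * (1 - N1 / N2)"
      unfolding r1 g1 using True by simp
    also have "\<dots> = qv^(X + L) * tv^(1 + (K d b + A)) * F2 * F1"
      unfolding key by (simp add: power_add mult_ac)
    also have "\<dots> = GL L A K b a c d * (1 - rhoL A L b a c d)"
      unfolding g2 r2 qw Kw sw using True by simp
    finally show ?thesis .
  next
    case False
    then have e0: "chi3 d a b = 0" using chi3_01[of d a b] n1 by auto
    have key: "1 - tv * (N1 / N2) = F2"
      using N2nz unfolding F2_def N1_def N2_def by (simp add: field_simps)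
    have "GL L A K a b c d * (1 - rhoL A L a b c d) = qv^X * tv^(K d b) * F1 * (1 - tv * (N1 / N2))"
      unfolding r1 g1 using e0 by simp
    also have "\<dots> = qv^X * tv^(K d b) * F2 * F1"
      unfolding key by (simp add: mult_ac)
    also have "\<dots> = GL L A K b a c d * (1 - rhoL A L b a c d)"
      unfolding g2 r2 qw Kw sw using e0 by simp
    finally show ?thesis .
  qed
  thus ?thesis unfolding A_def K_def .
qed

lemma L2:
  assumes fin: "finite W" and vW: "\<forall>v\<in>W. f v \<notin> {a,b,c,d}" and L: "L \<ge> 1"
   and n1: "a\<noteq>b" "c\<noteq>d" "a\<noteq>d" "b\<noteq>d"
  shows "GL L (card W) (Kf W f) a b c d * (1 - rhoL (card W) L a b c d)
       = GL L (card W) (Kf W f) b a c d * (1 - rhoL (card W) L b a c d)"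
proof (cases "distinct [a,b,c,d]")
  case True
  have s1: "chi3 d c b = 1 - chi3 c d b" "chi3 d c a = 1 - chi3 c d a"
    using True by (auto intro!: chi3_swap)
  have o1: "chi3 c d a = 0 \<or> chi3 c d a = 1" "chi3 c d b = 0 \<or> chi3 c d b = 1"
    using chi3_01[of c d a] chi3_01[of c d b] True by auto
  have T2: "distinct [b,a,c,d]" using True by auto
  show ?thesis
  proof (cases "chi3 c d a = chi3 c d b")
    case True
    have r: "rhoL (card W) L a b c d = 0" "rhoL (card W) L b a c d = 0"
      using True T2 \<open>distinct [a,b,c,d]\<close> unfolding rhoL_def by auto
    have K: "Kf W f c a + Kf W f d b = Kf W f c b + Kf W f d a"
      using fin vW \<open>distinct [a,b,c,d]\<close> True by (rule K_sw)
    have q: "(if c > a then L else 0) + (if d > b then L else 0)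
       = (if c > b then L else 0) + (if d > a then L else (0::nat))" using True by (rule qexp_sw)
    have "GL L (card W) (Kf W f) a b c d = GL L (card W) (Kf W f) b a c d"
      unfolding GL_def fac_def using True \<open>distinct [a,b,c,d]\<close>
      by (simp add: q add.assoc[symmetric] K)
    then show ?thesis using r by simp
  next
    case False
    have e: "chi3 d c b = chi3 c d a" "chi3 d c a = chi3 c d b" using False s1 o1 by auto
    have r: "rhoL (card W) L a b c d = 1" "rhoL (card W) L b a c d = 1"
      using False T2 \<open>distinct [a,b,c,d]\<close> e unfolding rhoL_def by auto
    then show ?thesis by simp
  qed
next
  case False
  hence "a = c \<or> b = c" using n1 by auto
  moreover
  { assume ac: "a = c"
    have ?thesis using L2_ac[OF fin vW L n1 ac] . }
  moreover
  { assume bc: "b = c"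
    have vW': "\<forall>v\<in>W. f v \<notin> {b,a,c,d}" using vW by auto
    have ?thesis using L2_ac[OF fin vW' L _ _ _ _ bc] n1 by auto }
  ultimately show ?thesis by blast
qed



definition phi :: "nat \<Rightarrow> nat \<Rightarrow> nat \<times> nat \<Rightarrow> nat \<times> nat" where
  "phi i h u = (if snd u \<le> h then (if fst u = i then (i+1, snd u) else if fst u = i+1 then (i, snd u) else u) else u)"

lemma Omega_phi: "Omega i h T = T \<circ> phi i h"
proof (induct h)
  case 0
  show ?case by (auto simp: swap_row_def phi_def fun_eq_iff)
next
  case (Suc h)
  show ?case by (auto simp: Suc swap_row_def phi_def fun_eq_iff)
qed

lemma Omega_app: "Omega i h T u = T (phi i h u)"
  by (simp add: Omega_phi)

lemma phi_phi: "phi i h (phi i h u) = u"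
  by (cases u) (auto simp: phi_def)

lemma inj_phi: "inj_on (phi i h) S"
  by (rule inj_on_inverseI[where g = "phi i h"]) (rule phi_phi)

lemma Omega_invol: "Omega i h (Omega i h T) = T"
  by (simp add: Omega_phi fun_eq_iff phi_phi)

lemma phi_adg:
  assumes "1 \<le> i" "i+1 \<le> n" "\<alpha> i = \<alpha> (i+1)"
  shows "phi i h u \<in> adg n \<alpha> \<longleftrightarrow> u \<in> adg n \<alpha>"
  using assms by (cases u) (auto simp: phi_def adg_def dg_def)

lemma cell_adg: "1 \<le> j \<Longrightarrow> j \<le> n \<Longrightarrow> r \<le> \<alpha> j \<Longrightarrow> (j, r) \<in> adg n \<alpha>"
  by (cases r) (auto simp: adg_def dg_def)

lemma dg_Sigma: "dg n \<alpha> = Sigma {1..n} (\<lambda>j. {1..\<alpha> j})"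
  by (auto simp: dg_def)

lemma finite_dg: "finite (dg n \<alpha>)"
  by (simp add: dg_Sigma)

lemma finite_adg: "finite (adg n \<alpha>)"
proof -
  have "{(j, 0) | j. 1 \<le> j \<and> j \<le> n} = (\<lambda>j. (j, 0::nat)) ` {1..n}" by auto
  thus ?thesis unfolding adg_def using finite_dg by simp
qed

lemma dg_adg: "dg n \<alpha> \<subseteq> adg n \<alpha>" by (auto simp: adg_def)

lemma Arm_adg: "Arm n \<alpha> u \<subseteq> adg n \<alpha>"
  by (auto simp: Arm_def adg_def)

lemma finite_Arm: "finite (Arm n \<alpha> u)"
  using finite_subset[OF Arm_adg finite_adg] .

definition gw :: "nat \<Rightarrow> (nat \<Rightarrow> nat) \<Rightarrow> (nat \<times> nat \<Rightarrow> nat) \<Rightarrow> nat \<times> nat \<Rightarrow> qt" where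
  "gw n \<alpha> T u = qv ^ (if T u > T (south u) then leg \<alpha> u + 1 else 0)
     * tv ^ card {v \<in> Arm n \<alpha> u. chi3 (T u) (T v) (T (south u)) \<noteq> 1}
     * (if T u \<noteq> T (south u) then (1 - tv) / (1 - qv ^ (1 + leg \<alpha> u) * tv ^ (1 + arm n \<alpha> u)) else 1)"

lemma wt_prod: "wt n \<alpha> T = (\<Prod>u\<in>dg n \<alpha>. gw n \<alpha> T u)"
proof -
  have m: "maj n \<alpha> T = (\<Sum>u\<in>dg n \<alpha>. if T u > T (south u) then leg \<alpha> u + 1 else 0)"
    unfolding maj_def descents_def using finite_dg by (rule sum.inter_filter)
  have ct: "coinv_triples n \<alpha> T = Sigma (dg n \<alpha>) (\<lambda>u. {v \<in> Arm n \<alpha> u. chi3 (T u) (T v) (T (south u)) \<noteq> 1})"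
    unfolding coinv_triples_def by auto
  have c: "coinv n \<alpha> T = (\<Sum>u\<in>dg n \<alpha>. card {v \<in> Arm n \<alpha> u. chi3 (T u) (T v) (T (south u)) \<noteq> 1})"
    unfolding coinv_def ct using finite_dg finite_Arm by (intro card_SigmaI) auto
  have p: "(\<Prod>u \<in> {u \<in> dg n \<alpha>. T u \<noteq> T (south u)}.
        (1 - tv) / (1 - qv ^ (1 + leg \<alpha> u) * tv ^ (1 + arm n \<alpha> u)))
      = (\<Prod>u\<in>dg n \<alpha>. if T u \<noteq> T (south u) then (1 - tv) / (1 - qv ^ (1 + leg \<alpha> u) * tv ^ (1 + arm n \<alpha> u)) else 1)"
    using finite_dg by (rule prod.inter_filter)
  show ?thesis unfolding wt_def m c p gw_def power_sum prod.distrib ..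
qed

definition Cout :: "nat \<Rightarrow> (nat \<Rightarrow> nat) \<Rightarrow> nat \<Rightarrow> (nat \<times> nat) set" where
  "Cout n \<alpha> i = {u \<in> dg n \<alpha>. fst u \<noteq> i \<and> fst u \<noteq> i+1}"

lemma wt_split:
  assumes "1 \<le> i" "i+1 \<le> n" "\<alpha> i = \<alpha> (i+1)"
  shows "wt n \<alpha> T = (\<Prod>u\<in>Cout n \<alpha> i. gw n \<alpha> T u)
           * (\<Prod>r<\<alpha> i. gw n \<alpha> T (i, Suc r) * gw n \<alpha> T (i+1, Suc r))"
proof -
  define C1 where "C1 = (\<lambda>r. (i, Suc r)) ` {..<\<alpha> i}"
  define C2 where "C2 = (\<lambda>r. (i+1, Suc r)) ` {..<\<alpha> i}"
  have c1: "C1 = {u \<in> dg n \<alpha>. fst u = i}"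
  proof
    show "C1 \<subseteq> {u \<in> dg n \<alpha>. fst u = i}" unfolding C1_def dg_def using assms by auto
    show "{u \<in> dg n \<alpha>. fst u = i} \<subseteq> C1"
    proof
      fix u assume "u \<in> {u \<in> dg n \<alpha>. fst u = i}"
      then show "u \<in> C1" unfolding C1_def dg_def
        by (intro image_eqI[where x="snd u - 1"]) auto
    qed
  qed
  have c2: "C2 = {u \<in> dg n \<alpha>. fst u = i+1}"
  proof
    show "C2 \<subseteq> {u \<in> dg n \<alpha>. fst u = i+1}" unfolding C2_def dg_def using assms by auto
    show "{u \<in> dg n \<alpha>. fst u = i+1} \<subseteq> C2"
    proof
      fix u assume "u \<in> {u \<in> dg n \<alpha>. fst u = i+1}"
      then show "u \<in> C2" unfolding C2_def dg_def using assms
        by (intro image_eqI[where x="snd u - 1"]) auto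
    qed
  qed
  have d: "dg n \<alpha> = Cout n \<alpha> i \<union> (C1 \<union> C2)"
    unfolding c1 c2 Cout_def by auto
  have fin: "finite (Cout n \<alpha> i)" "finite C1" "finite C2"
    using finite_dg unfolding Cout_def C1_def C2_def by auto
  have dis: "Cout n \<alpha> i \<inter> (C1 \<union> C2) = {}" "C1 \<inter> C2 = {}"
    unfolding Cout_def C1_def C2_def by auto
  have p1: "(\<Prod>u\<in>C1. gw n \<alpha> T u) = (\<Prod>r<\<alpha> i. gw n \<alpha> T (i, Suc r))"
    unfolding C1_def by (subst prod.reindex) (auto simp: inj_on_def)
  have p2: "(\<Prod>u\<in>C2. gw n \<alpha> T u) = (\<Prod>r<\<alpha> i. gw n \<alpha> T (i+1, Suc r))"
    unfolding C2_def by (subst prod.reindex) (auto simp: inj_on_def)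
  show ?thesis
    unfolding wt_prod d prod.union_disjoint[OF fin(1) finite_UnI[OF fin(2,3)] dis(1)]
      prod.union_disjoint[OF fin(2,3) dis(2)] p1 p2 prod.distrib ..
qed

lemma Arm_i:
  assumes "1 \<le> i" "i+1 \<le> n" "\<alpha> i = \<alpha> (i+1)" "r < \<alpha> i"
  shows "Arm n \<alpha> (i, Suc r) = insert (i+1, Suc r) (Arm n \<alpha> (i+1, Suc r))"
  using assms unfolding Arm_def adg_def dg_def by (auto simp: less_Suc_eq)

lemma Arm_i1_cols:
  assumes "\<alpha> i = \<alpha> (i+1)" "v \<in> Arm n \<alpha> (i+1, R)"
  shows "fst v \<noteq> i \<and> fst v \<noteq> i+1"
  using assms unfolding Arm_def by auto

lemma gw_pair:
  assumes "1 \<le> i" "i+1 \<le> n" "\<alpha> i = \<alpha> (i+1)" "r < \<alpha> i"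
  shows "gw n \<alpha> T (i, Suc r) * gw n \<alpha> T (i+1, Suc r)
    = GL (leg \<alpha> (i+1, Suc r) + 1) (arm n \<alpha> (i+1, Suc r)) (Kf (Arm n \<alpha> (i+1, Suc r)) T)
         (T (i, r)) (T (i+1, r)) (T (i, Suc r)) (T (i+1, Suc r))"
proof -
  define W where "W = Arm n \<alpha> (i+1, Suc r)"
  have nin: "(i+1, Suc r) \<notin> W" unfolding W_def Arm_def by auto
  have AI: "Arm n \<alpha> (i, Suc r) = insert (i+1, Suc r) W" unfolding W_def using assms by (rule Arm_i)
  have fW: "finite W" unfolding W_def by (rule finite_Arm)
  have arm: "arm n \<alpha> (i, Suc r) = card W + 1" unfolding arm_def AI using fW nin by simp
  have leg: "leg \<alpha> (i, Suc r) = leg \<alpha> (i+1, Suc r)" unfolding leg_def using assms by simp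
  have cnt: "card {v \<in> insert (i+1, Suc r) W. P v} = (if P (i+1, Suc r) then 1 else 0) + card {v \<in> W. P v}" for P
  proof -
    have "{v \<in> insert (i+1, Suc r) W. P v} = (if P (i+1, Suc r) then insert (i+1, Suc r) {v \<in> W. P v} else {v \<in> W. P v})"
      by auto
    thus ?thesis using fW nin by simp
  qed
  show ?thesis
    unfolding gw_def GL_def fac_def Kf_def south_def AI arm cnt leg W_def[symmetric] arm_def[of n \<alpha> "(i+1, Suc r)"]
    by (simp add: power_add ac_simps)
qed

lemma card_perm:
  assumes "inj_on g S" "g ` S = S"
  shows "card {v \<in> S. P (g v)} = card {v \<in> S. P v}"
proof -
  have "g ` {v \<in> S. P (g v)} = {v \<in> S. P v}"
  proof
    show "g ` {v \<in> S. P (g v)} \<subseteq> {v \<in> S. P v}" using assms(2) by auto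
    show "{v \<in> S. P v} \<subseteq> g ` {v \<in> S. P (g v)}"
    proof
      fix w assume w: "w \<in> {v \<in> S. P v}"
      then obtain x where "x \<in> S" "w = g x" using assms(2) by (metis (no_types, lifting) imageE mem_Collect_eq)
      thus "w \<in> g ` {v \<in> S. P (g v)}" using w by auto
    qed
  qed
  moreover have "inj_on g {v \<in> S. P (g v)}" using assms(1) by (rule inj_on_subset) auto
  ultimately show ?thesis using card_image by metis
qed

lemma phi_Arm_into:
  assumes "1 \<le> i" "i+1 \<le> n" "\<alpha> i = \<alpha> (i+1)" "fst u \<noteq> i" "fst u \<noteq> i+1" "v \<in> Arm n \<alpha> u"
  shows "phi i h v \<in> Arm n \<alpha> u"
  using assms unfolding Arm_def adg_def dg_def phi_def
  by (cases u; cases v) (auto split: if_splits)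

lemma phi_Arm:
  assumes "1 \<le> i" "i+1 \<le> n" "\<alpha> i = \<alpha> (i+1)" "fst u \<noteq> i" "fst u \<noteq> i+1"
  shows "phi i h ` Arm n \<alpha> u = Arm n \<alpha> u"
proof
  show "phi i h ` Arm n \<alpha> u \<subseteq> Arm n \<alpha> u" using phi_Arm_into[OF assms] by auto
  show "Arm n \<alpha> u \<subseteq> phi i h ` Arm n \<alpha> u"
  proof
    fix v assume "v \<in> Arm n \<alpha> u"
    then have "phi i h v \<in> Arm n \<alpha> u" using phi_Arm_into[OF assms] by auto
    then show "v \<in> phi i h ` Arm n \<alpha> u" by (metis image_eqI phi_phi)
  qed
qed

lemma gw_out:
  assumes "1 \<le> i" "i+1 \<le> n" "\<alpha> i = \<alpha> (i+1)" "u \<in> Cout n \<alpha> i"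
  shows "gw n \<alpha> (Omega i h T) u = gw n \<alpha> T u"
proof -
  have u: "fst u \<noteq> i" "fst u \<noteq> i+1" using assms(4) unfolding Cout_def by auto
  have p1: "phi i h u = u" "phi i h (south u) = south u" using u unfolding phi_def south_def by auto
  have c: "card {v \<in> Arm n \<alpha> u. chi3 (T u) (T (phi i h v)) (T (south u)) \<noteq> 1}
         = card {v \<in> Arm n \<alpha> u. chi3 (T u) (T v) (T (south u)) \<noteq> 1}"
    by (rule card_perm[OF inj_phi phi_Arm[OF assms(1-3) u]])
  show ?thesis unfolding gw_def Omega_app p1 c ..
qed

lemma Kf_inv:
  assumes "\<alpha> i = \<alpha> (i+1)"
  shows "Kf (Arm n \<alpha> (i+1, R)) (Omega i h T) = Kf (Arm n \<alpha> (i+1, R)) T"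
proof -
  have "phi i h v = v" if "v \<in> Arm n \<alpha> (i+1, R)" for v
    using Arm_i1_cols[OF assms that] unfolding phi_def by auto
  thus ?thesis unfolding Kf_def Omega_app by (intro ext arg_cong[where f=card]) auto
qed



lemma rho_loc:
  assumes "r < \<alpha> i"
  shows "rho n \<alpha> i T r = rhoL (card (Arm n \<alpha> (i+1, Suc r))) (leg \<alpha> (i+1, Suc r) + 1)
           (T (i, r)) (T (i+1, r)) (T (i, Suc r)) (T (i+1, Suc r))"
  using assms unfolding rho_def rhoL_def Let_def arm_def by simp

lemma rho_top: "rho n \<alpha> i T (\<alpha> i) = 0"
  unfolding rho_def by simp

lemma naf_ne: "T \<in> NAF n \<alpha> \<tau> \<Longrightarrow> u \<in> adg n \<alpha> \<Longrightarrow> v \<in> adg n \<alpha> \<Longrightarrow> attacks u v \<Longrightarrow> T u \<noteq> T v"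
  unfolding NAF_def by auto

lemma Arm_att:
  assumes "\<alpha> i = \<alpha> (i+1)" "v \<in> Arm n \<alpha> (i+1, Suc r)"
  shows "attacks v (i, r) \<and> attacks v (i+1, r) \<and> attacks v (i, Suc r) \<and> attacks v (i+1, Suc r)"
  using assms unfolding Arm_def attacks_def by (auto simp: less_Suc_eq)

lemma prodE_aux:
  fixes h k :: nat and g :: "nat \<Rightarrow> 'a::comm_ring_1"
  shows "(\<Prod>r<Suc (h + k). if r < h then g r else if r = h then 1 - g h else 1)
     = (\<Prod>r<h. g r) * (1 - g h)"
proof (induct k)
  case 0
  have "(\<Prod>r<h. if r < h then g r else if r = h then 1 - g h else (1::'a)) = (\<Prod>r<h. g r)"
    by (rule prod.cong) auto
  then show ?case by (simp only: add_0_right prod.lessThan_Suc) simp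
next
  case (Suc k)
  have "(\<Prod>r<Suc (h + Suc k). if r < h then g r else if r = h then 1 - g h else (1::'a))
     = (\<Prod>r<Suc (h + k). if r < h then g r else if r = h then 1 - g h else (1::'a))"
    by (simp only: add_Suc_right prod.lessThan_Suc) simp
  then show ?case using Suc by simp
qed

lemma prodE:
  fixes h m :: nat and g :: "nat \<Rightarrow> 'a::comm_ring_1"
  assumes "h \<le> m" "g m = (0::'a::comm_ring_1)"
  shows "(\<Prod>r<h. g r) * (1 - g h) = (\<Prod>r<m. if r < h then g r else if r = h then 1 - g h else 1)"
proof (cases "h = m")
  case True
  hence m: "m = h" by simp
  have p: "(\<Prod>r<h. if r < h then g r else if r = h then 1 - g h else (1::'a)) = (\<Prod>r<h. g r)"
    by (rule prod.cong) auto
  have g0: "g h = 0" using assms(2) unfolding m .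
  show ?thesis unfolding m p using g0 by simp
next
  case False
  then have "h < m" using assms(1) by simp
  then obtain k where k: "m = Suc (h + k)" using less_imp_Suc_add by blast
  show ?thesis unfolding k by (rule prodE_aux[symmetric])
qed

lemma main_eq:
  assumes c: "1 \<le> i" "i+1 \<le> n" "\<alpha> i = \<alpha> (i+1)" and T: "T \<in> NAF n \<alpha> \<tau>"
    and U: "Omega i h T \<in> NAF n \<alpha> \<tau>'" and h: "h \<le> \<alpha> i"
  shows "wt n \<alpha> T * ((\<Prod>r<h. rho n \<alpha> i T r) * (1 - rho n \<alpha> i T h))
       = wt n \<alpha> (Omega i h T) * ((\<Prod>r<h. rho n \<alpha> i (Omega i h T) r) * (1 - rho n \<alpha> i (Omega i h T) h))"
proof -
  define U where "U = Omega i h T"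
  define m where "m = \<alpha> i"
  define E where "E = (\<lambda>S r. if r < h then rho n \<alpha> i S r else if r = h then 1 - rho n \<alpha> i S h else 1)"
  have PE: "(\<Prod>r<h. rho n \<alpha> i S r) * (1 - rho n \<alpha> i S h) = (\<Prod>r<m. E S r)" for S
    unfolding E_def m_def using h rho_top by (intro prodE) auto
  define GLr where "GLr = (\<lambda>r. GL (leg \<alpha> (i+1, Suc r) + 1) (card (Arm n \<alpha> (i+1, Suc r))) (Kf (Arm n \<alpha> (i+1, Suc r)) T))"
  have gpT: "gw n \<alpha> T (i, Suc r) * gw n \<alpha> T (i+1, Suc r)
      = GLr r (T (i, r)) (T (i+1, r)) (T (i, Suc r)) (T (i+1, Suc r))" if "r < m" for r
    using gw_pair[OF c, of r T] that unfolding GLr_def m_def arm_def by simp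
  have gpU: "gw n \<alpha> U (i, Suc r) * gw n \<alpha> U (i+1, Suc r)
      = GLr r (U (i, r)) (U (i+1, r)) (U (i, Suc r)) (U (i+1, Suc r))" if "r < m" for r
    using gw_pair[OF c, of r U] that Kf_inv[OF c(3), of n "Suc r" h T] unfolding GLr_def m_def arm_def U_def by simp
  have out: "(\<Prod>u\<in>Cout n \<alpha> i. gw n \<alpha> U u) = (\<Prod>u\<in>Cout n \<alpha> i. gw n \<alpha> T u)"
    unfolding U_def using gw_out[OF c] by (intro prod.cong) auto
  have key: "GLr r (T (i, r)) (T (i+1, r)) (T (i, Suc r)) (T (i+1, Suc r)) * E T r
           = GLr r (U (i, r)) (U (i+1, r)) (U (i, Suc r)) (U (i+1, Suc r)) * E U r" if r: "r < m" for r
  proof -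
    define a where "a = T (i, r)"
    define b where "b = T (i+1, r)"
    define cc where "cc = T (i, Suc r)"
    define d where "d = T (i+1, Suc r)"
    define W where "W = Arm n \<alpha> (i+1, Suc r)"
    define L where "L = leg \<alpha> (i+1, Suc r) + 1"
    have Lge: "L \<ge> 1" unfolding L_def by simp
    have fW: "finite W" unfolding W_def by (rule finite_Arm)
    have ad: "(i, r) \<in> adg n \<alpha>" "(i+1, r) \<in> adg n \<alpha>" "(i, Suc r) \<in> adg n \<alpha>" "(i+1, Suc r) \<in> adg n \<alpha>"
      using c r unfolding m_def by (auto intro!: cell_adg)
    have vW: "\<forall>v\<in>W. T v \<notin> {a, b, cc, d}"
    proof
      fix v assume v: "v \<in> W"
      have va: "v \<in> adg n \<alpha>" using v unfolding W_def by (meson Arm_adg subsetD)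
      have at: "attacks v (i, r) \<and> attacks v (i+1, r) \<and> attacks v (i, Suc r) \<and> attacks v (i+1, Suc r)"
        using Arm_att[OF c(3)] v unfolding W_def by auto
      show "T v \<notin> {a, b, cc, d}" unfolding a_def b_def cc_def d_def
        using naf_ne[OF T va ad(1)] naf_ne[OF T va ad(2)] naf_ne[OF T va ad(3)] naf_ne[OF T va ad(4)] at
        by auto
    qed
    have nab: "a \<noteq> b" unfolding a_def b_def by (rule naf_ne[OF T ad(1,2)]) (simp add: attacks_def)
    have ncd: "cc \<noteq> d" unfolding cc_def d_def by (rule naf_ne[OF T ad(3,4)]) (simp add: attacks_def)
    have nad: "a \<noteq> d" unfolding a_def d_def by (rule naf_ne[OF T ad(1,4)]) (simp add: attacks_def)
    have nU: "U (i, r) \<noteq> U (i+1, Suc r)" unfolding U_def by (rule naf_ne[OF U ad(1,4)]) (simp add: attacks_def)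
    have rT: "rho n \<alpha> i T r = rhoL (card W) L a b cc d"
      unfolding W_def L_def a_def b_def cc_def d_def using r unfolding m_def by (rule rho_loc)
    have rU: "rho n \<alpha> i U r = rhoL (card W) L (U (i, r)) (U (i+1, r)) (U (i, Suc r)) (U (i+1, Suc r))"
      unfolding W_def L_def using r unfolding m_def by (rule rho_loc)
    have G: "GLr r = GL L (card W) (Kf W T)" unfolding GLr_def W_def L_def ..
    consider (lt) "r < h" | (eq) "r = h" | (gt) "r > h" by linarith
    then show ?thesis
    proof cases
      case lt
      have Uv: "U (i, r) = b" "U (i+1, r) = a" "U (i, Suc r) = d" "U (i+1, Suc r) = cc"
        using lt unfolding U_def Omega_app phi_def a_def b_def cc_def d_def by auto
      have nbc: "b \<noteq> cc" using nU Uv by simp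
      have ET: "E T r = rhoL (card W) L a b cc d" "E U r = rhoL (card W) L b a d cc"
        using lt rT rU Uv unfolding E_def by auto
      show ?thesis unfolding G ET Uv unfolding a_def[symmetric] b_def[symmetric] cc_def[symmetric] d_def[symmetric]
        by (rule L1[OF fW vW Lge nab ncd nad nbc])
    next
      case eq
      have Uv: "U (i, r) = b" "U (i+1, r) = a" "U (i, Suc r) = cc" "U (i+1, Suc r) = d"
        using eq unfolding U_def Omega_app phi_def a_def b_def cc_def d_def by auto
      have nbd: "b \<noteq> d" using nU Uv by simp
      have ET: "E T r = 1 - rhoL (card W) L a b cc d" "E U r = 1 - rhoL (card W) L b a cc d"
        using eq rT rU Uv unfolding E_def by auto
      show ?thesis unfolding G ET Uv unfolding a_def[symmetric] b_def[symmetric] cc_def[symmetric] d_def[symmetric]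
        by (rule L2[OF fW vW Lge nab ncd nad nbd])
    next
      case gt
      have Uv: "U (i, r) = a" "U (i+1, r) = b" "U (i, Suc r) = cc" "U (i+1, Suc r) = d"
        using gt unfolding U_def Omega_app phi_def a_def b_def cc_def d_def by auto
      have ET: "E T r = 1" "E U r = 1" using gt unfolding E_def by auto
      show ?thesis unfolding ET Uv a_def b_def cc_def d_def ..
    qed
  qed
  have "wt n \<alpha> T * ((\<Prod>r<h. rho n \<alpha> i T r) * (1 - rho n \<alpha> i T h))
      = (\<Prod>u\<in>Cout n \<alpha> i. gw n \<alpha> T u) * (\<Prod>r<m. GLr r (T (i, r)) (T (i+1, r)) (T (i, Suc r)) (T (i+1, Suc r)) * E T r)"
  proof -
    have s1: "(\<Prod>r<m. gw n \<alpha> T (i, Suc r) * gw n \<alpha> T (i+1, Suc r))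
        = (\<Prod>r<m. GLr r (T (i, r)) (T (i+1, r)) (T (i, Suc r)) (T (i+1, Suc r)))"
      using gpT by (intro prod.cong) auto
    show ?thesis unfolding wt_split[OF c] PE m_def[symmetric] s1 by (simp add: prod.distrib mult.assoc)
  qed
  also have "\<dots> = (\<Prod>u\<in>Cout n \<alpha> i. gw n \<alpha> U u) * (\<Prod>r<m. GLr r (U (i, r)) (U (i+1, r)) (U (i, Suc r)) (U (i+1, Suc r)) * E U r)"
    unfolding out using key by (intro arg_cong[where f="\<lambda>x. _ * x"] prod.cong) auto
  also have "\<dots> = wt n \<alpha> U * ((\<Prod>r<h. rho n \<alpha> i U r) * (1 - rho n \<alpha> i U h))"
  proof -
    have s1: "(\<Prod>r<m. gw n \<alpha> U (i, Suc r) * gw n \<alpha> U (i+1, Suc r))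
        = (\<Prod>r<m. GLr r (U (i, r)) (U (i+1, r)) (U (i, Suc r)) (U (i+1, Suc r)))"
      using gpU by (intro prod.cong) auto
    show ?thesis unfolding wt_split[OF c] PE m_def[symmetric] s1 by (simp add: prod.distrib mult.assoc)
  qed
  finally show ?thesis unfolding U_def .
qed



lemma Omega_inj:
  assumes c: "1 \<le> i" "i+1 \<le> n" "\<alpha> i = \<alpha> (i+1)" and T: "T \<in> NAF n \<alpha> \<tau>"
    and h: "h \<le> \<alpha> i" "h' \<le> \<alpha> i" and e: "Omega i h T = Omega i h' T"
  shows "h = h'"
proof (rule ccontr)
  assume ne: "h \<noteq> h'"
  have *: "T (i, k) \<noteq> T (i+1, k)" if "k \<le> \<alpha> i" for k
    using c that by (intro naf_ne[OF T]) (auto intro!: cell_adg simp: attacks_def)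
  show False
  proof (cases "h < h'")
    case True
    have "Omega i h T (i, h') = Omega i h' T (i, h')" using e by simp
    then show False using True * [OF h(2)] unfolding Omega_app phi_def by simp
  next
    case False
    then have "h' < h" using ne by simp
    have "Omega i h T (i, h) = Omega i h' T (i, h)" using e by simp
    then show False using \<open>h' < h\<close> * [OF h(1)] unfolding Omega_app phi_def by simp
  qed
qed

lemma P_eval:
  assumes c: "1 \<le> i" "i+1 \<le> n" "\<alpha> i = \<alpha> (i+1)" and T: "T \<in> NAF n \<alpha> \<tau>" and h: "h \<le> \<alpha> i"
  shows "P_i n \<alpha> i T (Omega i h T) = (\<Prod>r<h. rho n \<alpha> i T r) * (1 - rho n \<alpha> i T h)"
proof -
  have ex: "\<exists>h'\<le>\<alpha> i. Omega i h T = Omega i h' T" using h by blast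
  have th: "(THE h'. h' \<le> \<alpha> i \<and> Omega i h T = Omega i h' T) = h"
    using h Omega_inj[OF c T] by (intro the_equality) auto
  show ?thesis unfolding P_i_def Let_def th using ex by simp
qed

lemma P_zero:
  assumes "\<not> (\<exists>h\<le>\<alpha> i. U = Omega i h T)" shows "P_i n \<alpha> i T U = 0"
  unfolding P_i_def by (rule if_not_P[OF assms])

lemma telescope:
  fixes g :: "nat \<Rightarrow> 'a::comm_ring_1"
  shows "(\<Sum>h\<le>k. (\<Prod>r<h. g r) * (1 - g h)) = 1 - (\<Prod>r<Suc k. g r)"
proof (induct k)
  case 0
  then show ?case by simp
next
  case (Suc k)
  have "(\<Sum>h\<le>Suc k. (\<Prod>r<h. g r) * (1 - g h)) = (1 - (\<Prod>r<Suc k. g r)) + (\<Prod>r<Suc k. g r) * (1 - g (Suc k))"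
    using Suc by simp
  also have "\<dots> = 1 - (\<Prod>r<Suc (Suc k). g r)" by (simp add: algebra_simps)
  finally show ?case .
qed

lemma finite_fillings: "finite (fillings n \<alpha> \<tau>)"
proof -
  have "fillings n \<alpha> \<tau> \<subseteq> (\<lambda>f u. if u \<in> adg n \<alpha> then f u else 0) ` (PiE (adg n \<alpha>) (\<lambda>_. {1..n}))"
  proof
    fix T assume T: "T \<in> fillings n \<alpha> \<tau>"
    have "T = (\<lambda>u. if u \<in> adg n \<alpha> then restrict T (adg n \<alpha>) u else 0)"
      using T unfolding fillings_def by (auto simp: fun_eq_iff)
    moreover have "restrict T (adg n \<alpha>) \<in> PiE (adg n \<alpha>) (\<lambda>_. {1..n})"
      using T unfolding fillings_def by auto
    ultimately show "T \<in> (\<lambda>f u. if u \<in> adg n \<alpha> then f u else 0) ` (PiE (adg n \<alpha>) (\<lambda>_. {1..n}))"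
      by blast
  qed
  moreover have "finite (PiE (adg n \<alpha>) (\<lambda>_. {1..n::nat}))" using finite_adg by (intro finite_PiE) auto
  ultimately show ?thesis using finite_subset by blast
qed

lemma finite_NAF: "finite (NAF n \<alpha> \<tau>)"
  using finite_fillings unfolding NAF_def by simp

lemma Omega_fill:
  assumes c: "1 \<le> i" "i+1 \<le> n" "\<alpha> i = \<alpha> (i+1)" and T: "T \<in> fillings n \<alpha> \<tau>"
  shows "Omega i h T \<in> fillings n \<alpha> (perm_si \<tau> i)"
proof -
  have pa: "phi i h u \<in> adg n \<alpha> \<longleftrightarrow> u \<in> adg n \<alpha>" for u using phi_adg[OF c] .
  have b: "T (phi i h (j, 0)) = perm_si \<tau> i j" if "j \<in> {1..n}" for j
    using T that c unfolding fillings_def phi_def perm_si_def by auto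
  have z: "T (phi i h u) = 0" if "u \<notin> adg n \<alpha>" for u
    using T pa[of u] that unfolding fillings_def by (metis (mono_tags, lifting) mem_Collect_eq)
  have r: "T (phi i h u) \<in> {1..n}" if "u \<in> adg n \<alpha>" for u
    using T pa[of u] that unfolding fillings_def by auto
  show ?thesis using b z r unfolding fillings_def Omega_app by auto
qed

lemma att_phi:
  assumes "attacks u v" "\<not> attacks (phi i h u) (phi i h v)"
  shows "(\<exists>r<h. (u = (i, r) \<and> v = (i+1, Suc r)) \<or> (v = (i, r) \<and> u = (i+1, Suc r)))
     \<or> (u = (i, h) \<and> v = (i+1, Suc h)) \<or> (v = (i, h) \<and> u = (i+1, Suc h))"
  using assms by (cases u; cases v) (auto simp: attacks_def phi_def split: if_splits)



lemma Omega_naf: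
  assumes c: "1 \<le> i" "i+1 \<le> n" "\<alpha> i = \<alpha> (i+1)" and T: "T \<in> NAF n \<alpha> \<tau>"
    and hb: "\<forall>r<h. T (i+1, r) \<noteq> T (i, Suc r)"
    and hd: "h < \<alpha> i \<Longrightarrow> T (i+1, h) \<noteq> T (i+1, Suc h)"
  shows "Omega i h T \<in> NAF n \<alpha> (perm_si \<tau> i)"
proof -
  have F: "Omega i h T \<in> fillings n \<alpha> (perm_si \<tau> i)"
    using Omega_fill[OF c] T unfolding NAF_def by auto
  have "Omega i h T u \<noteq> Omega i h T v" if u: "u \<in> adg n \<alpha>" and v: "v \<in> adg n \<alpha>" and a: "attacks u v" for u v
  proof (cases "attacks (phi i h u) (phi i h v)")
    case True
    have "phi i h u \<in> adg n \<alpha>" "phi i h v \<in> adg n \<alpha>" using phi_adg[OF c] u v by auto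
    then show ?thesis unfolding Omega_app using naf_ne[OF T _ _ True] by auto
  next
    case False
    from att_phi[OF a False] show ?thesis
    proof (elim disjE exE conjE)
      fix r assume r: "r < h" and e: "u = (i, r)" "v = (i+1, Suc r)"
      show ?thesis using hb r unfolding e Omega_app phi_def by auto
    next
      fix r assume r: "r < h" and e: "v = (i, r)" "u = (i+1, Suc r)"
      show ?thesis using hb r unfolding e Omega_app phi_def by auto
    next
      assume e: "u = (i, h)" "v = (i+1, Suc h)"
      have "h < \<alpha> i" using v c unfolding e adg_def dg_def by auto
      then show ?thesis using hd unfolding e Omega_app phi_def by auto
    next
      assume e: "v = (i, h)" "u = (i+1, Suc h)"
      have "h < \<alpha> i" using u c unfolding e adg_def dg_def by auto
      then show ?thesis using hd unfolding e Omega_app phi_def by auto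
    qed
  qed
  then show ?thesis using F unfolding NAF_def by auto
qed

lemma rhoL_bc: "a \<noteq> b \<Longrightarrow> c \<noteq> d \<Longrightarrow> a \<noteq> d \<Longrightarrow> b = c \<Longrightarrow> rhoL A L a b c d = 0"
  unfolding rhoL_def by (auto simp: insert_commute)

lemma rhoL_bd: "a \<noteq> b \<Longrightarrow> c \<noteq> d \<Longrightarrow> a \<noteq> d \<Longrightarrow> b = d \<Longrightarrow> rhoL A L a b c d = 1"
  unfolding rhoL_def by (cases "a = c") (auto simp: insert_commute)

lemma local_ne:
  assumes c: "1 \<le> i" "i+1 \<le> n" "\<alpha> i = \<alpha> (i+1)" and T: "T \<in> NAF n \<alpha> \<tau>" and r: "r < \<alpha> i"
  shows "T (i, r) \<noteq> T (i+1, r)" "T (i, Suc r) \<noteq> T (i+1, Suc r)" "T (i, r) \<noteq> T (i+1, Suc r)"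
proof -
  have ad: "(i, r) \<in> adg n \<alpha>" "(i+1, r) \<in> adg n \<alpha>" "(i, Suc r) \<in> adg n \<alpha>" "(i+1, Suc r) \<in> adg n \<alpha>"
    using c r by (auto intro!: cell_adg)
  show "T (i, r) \<noteq> T (i+1, r)" by (rule naf_ne[OF T ad(1,2)]) (simp add: attacks_def)
  show "T (i, Suc r) \<noteq> T (i+1, Suc r)" by (rule naf_ne[OF T ad(3,4)]) (simp add: attacks_def)
  show "T (i, r) \<noteq> T (i+1, Suc r)" by (rule naf_ne[OF T ad(1,4)]) (simp add: attacks_def)
qed

lemma rho_nz:
  assumes c: "1 \<le> i" "i+1 \<le> n" "\<alpha> i = \<alpha> (i+1)" and T: "T \<in> NAF n \<alpha> \<tau>" and r: "r < \<alpha> i"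
    and nz: "rho n \<alpha> i T r \<noteq> 0"
  shows "T (i+1, r) \<noteq> T (i, Suc r)"
  using nz rhoL_bc[OF local_ne[OF c T r]] unfolding rho_loc[of r \<alpha> i n T, OF r] by auto

lemma rho_n1:
  assumes c: "1 \<le> i" "i+1 \<le> n" "\<alpha> i = \<alpha> (i+1)" and T: "T \<in> NAF n \<alpha> \<tau>" and r: "r < \<alpha> i"
    and nz: "rho n \<alpha> i T r \<noteq> 1"
  shows "T (i+1, r) \<noteq> T (i+1, Suc r)"
  using nz rhoL_bd[OF local_ne[OF c T r]] unfolding rho_loc[of r \<alpha> i n T, OF r] by auto

lemma sum1:
  assumes c: "1 \<le> i" "i+1 \<le> n" "\<alpha> i = \<alpha> (i+1)" and T: "T \<in> NAF n \<alpha> \<tau>"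
  shows "(\<Sum>U\<in>NAF n \<alpha> (perm_si \<tau> i). P_i n \<alpha> i T U) = 1"
proof -
  define S where "S = NAF n \<alpha> (perm_si \<tau> i)"
  define G where "G = (\<lambda>h. Omega i h T) ` {..\<alpha> i}"
  define p where "p = (\<lambda>h. (\<Prod>r<h. rho n \<alpha> i T r) * (1 - rho n \<alpha> i T h))"
  have fS: "finite S" unfolding S_def by (rule finite_NAF)
  have fG: "finite G" unfolding G_def by simp
  have z1: "P_i n \<alpha> i T U = 0" if "U \<in> S \<union> G - G" for U
    using that unfolding G_def by (intro P_zero) auto
  have z2: "P_i n \<alpha> i T U = 0" if U: "U \<in> S \<union> G - S" for U
  proof -
    obtain h where h: "h \<le> \<alpha> i" "U = Omega i h T" using U unfolding G_def by auto
    have PU: "P_i n \<alpha> i T U = p h" unfolding h(2) p_def by (rule P_eval[OF c T h(1)])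
    show ?thesis
    proof (rule ccontr)
      assume "P_i n \<alpha> i T U \<noteq> 0"
      then have pn: "p h \<noteq> 0" using PU by simp
      have hb: "\<forall>r<h. T (i+1, r) \<noteq> T (i, Suc r)"
      proof (intro allI impI)
        fix r assume "r < h"
        then have "rho n \<alpha> i T r \<noteq> 0" using pn unfolding p_def by auto
        then show "T (i+1, r) \<noteq> T (i, Suc r)" using rho_nz[OF c T] \<open>r < h\<close> h(1) by auto
      qed
      have hd: "T (i+1, h) \<noteq> T (i+1, Suc h)" if "h < \<alpha> i"
      proof -
        have "rho n \<alpha> i T h \<noteq> 1" using pn unfolding p_def by auto
        then show ?thesis using rho_n1[OF c T that] by auto
      qed
      have "U \<in> S" unfolding S_def h(2) using Omega_naf[OF c T hb hd] by auto
      then show False using U by auto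
    qed
  qed
  have "(\<Sum>U\<in>S. P_i n \<alpha> i T U) = (\<Sum>U\<in>S \<union> G. P_i n \<alpha> i T U)"
    using fS fG z2 by (intro sum.mono_neutral_left) auto
  also have "\<dots> = (\<Sum>U\<in>G. P_i n \<alpha> i T U)"
    using fS fG z1 by (intro sum.mono_neutral_right) auto
  also have "\<dots> = (\<Sum>h\<le>\<alpha> i. P_i n \<alpha> i T (Omega i h T))"
    unfolding G_def using Omega_inj[OF c T] by (subst sum.reindex) (auto simp: inj_on_def)
  also have "\<dots> = (\<Sum>h\<le>\<alpha> i. p h)"
    unfolding p_def using P_eval[OF c T] by (intro sum.cong) auto
  also have "\<dots> = 1 - (\<Prod>r<Suc (\<alpha> i). rho n \<alpha> i T r)" unfolding p_def by (rule telescope)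
  also have "\<dots> = 1" by (simp add: rho_top)
  finally show ?thesis unfolding S_def .
qed

lemma perm_si_invol: "perm_si (perm_si \<sigma> i) i = \<sigma>"
  unfolding perm_si_def by (auto simp: fun_eq_iff)

theorem theorem3p8:
  fixes n i :: nat and \<alpha> \<sigma> :: "nat \<Rightarrow> nat"
  assumes "\<sigma> permutes {1..n}"
    and "1 \<le> i" and "i \<le> n - 1"
    and "\<alpha> i = \<alpha> (i+1)"
  shows "prob_bij (NAF n \<alpha> \<sigma>) (NAF n \<alpha> (perm_si \<sigma> i))
           (wt n \<alpha>) (wt n \<alpha>) (P_i n \<alpha> i) (P_i n \<alpha> i)"
proof -
  have c: "1 \<le> i" "i+1 \<le> n" "\<alpha> i = \<alpha> (i+1)" using assms(2-4) by auto
  have A: "(\<Sum>U\<in>NAF n \<alpha> (perm_si \<sigma> i). P_i n \<alpha> i T U) = 1" if T: "T \<in> NAF n \<alpha> \<sigma>" for T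
    by (rule sum1[OF c T])
  have B: "(\<Sum>T\<in>NAF n \<alpha> \<sigma>. P_i n \<alpha> i U T) = 1" if U: "U \<in> NAF n \<alpha> (perm_si \<sigma> i)" for U
    using sum1[OF c U] unfolding perm_si_invol .
  have C: "wt n \<alpha> T * P_i n \<alpha> i T U = wt n \<alpha> U * P_i n \<alpha> i U T"
    if T: "T \<in> NAF n \<alpha> \<sigma>" and U: "U \<in> NAF n \<alpha> (perm_si \<sigma> i)" for T U
  proof (cases "\<exists>h\<le>\<alpha> i. U = Omega i h T")
    case True
    then obtain h where h: "h \<le> \<alpha> i" "U = Omega i h T" by blast
    have TU: "T = Omega i h U" unfolding h(2) Omega_invol ..
    have U': "Omega i h T \<in> NAF n \<alpha> (perm_si \<sigma> i)" using U unfolding h(2) .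
    have "wt n \<alpha> T * P_i n \<alpha> i T U
        = wt n \<alpha> T * ((\<Prod>r<h. rho n \<alpha> i T r) * (1 - rho n \<alpha> i T h))"
      unfolding h(2) P_eval[OF c T h(1)] ..
    also have "\<dots> = wt n \<alpha> U * ((\<Prod>r<h. rho n \<alpha> i U r) * (1 - rho n \<alpha> i U h))"
      unfolding h(2) by (rule main_eq[OF c T U' h(1)])
    also have "\<dots> = wt n \<alpha> U * P_i n \<alpha> i U T"
      unfolding TU P_eval[OF c U h(1)] Omega_invol ..
    finally show ?thesis .
  next
    case False
    have nT: "\<not> (\<exists>h\<le>\<alpha> i. T = Omega i h U)"
    proof
      assume "\<exists>h\<le>\<alpha> i. T = Omega i h U"
      then obtain h where h: "h \<le> \<alpha> i" "T = Omega i h U" by blast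
      have "U = Omega i h T" unfolding h(2) Omega_invol by simp
      then show False using False h(1) by blast
    qed
    show ?thesis unfolding P_zero[of \<alpha> i U T n, OF False] P_zero[of \<alpha> i T U n, OF nT] by simp
  qed
  show ?thesis unfolding prob_bij_def
  proof (intro conjI ballI)
    show "(\<Sum>U\<in>NAF n \<alpha> (perm_si \<sigma> i). P_i n \<alpha> i T U) = 1" if "T \<in> NAF n \<alpha> \<sigma>" for T using A[OF that] .
    show "(\<Sum>T\<in>NAF n \<alpha> \<sigma>. P_i n \<alpha> i U T) = 1" if "U \<in> NAF n \<alpha> (perm_si \<sigma> i)" for U using B[OF that] .
    show "wt n \<alpha> T * P_i n \<alpha> i T U = wt n \<alpha> U * P_i n \<alpha> i U T"
      if "T \<in> NAF n \<alpha> \<sigma>" "U \<in> NAF n \<alpha> (perm_si \<sigma> i)" for T U using C[OF that] .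
  qed
qed

end
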